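(* For all teams $T,S$ the following are equivalent: (1) $T\equiv_{\mathrm{st}}S$; (2) for all teams $T_1,T_2$ with $T=T_1\cup T_2$ there are teams $S_1,S_2$ with $S=S_1\cup S_2$, $T_1\equiv_{\mathrm{st}}S_1$ and $T_2\equiv_{\mathrm{st}}S_2$.
   Context: A trace is an infinite sequence $t=t(0)t(1)\cdots$ of subsets of a set $\mathrm{AP}$ of propositions; a team is a set of traces. A stuttering function of a trace $t$ is a strictly increasing function $f:\mathbb N\to\mathbb N$ with $f(0)=0$ such that $t(f(k))=t(f(k)+1)=\cdots=t(f(k+1)-1)$ for all $k\ge0$. A stuttering function of a team $T$ is a function that is a stuttering function of every $t\in T$. For $f:\mathbb N\to\mathbb N$, $t[f]:=t(f(0))t(f(1))t(f(2))\cdots$ and $T[f]:=\{t[f]:t\in T\}$. Teams $T,T'$ are stutter-equivalent ($T\equiv_{\mathrm{st}}T'$) if there are a stuttering function $f$ of $T$ and a stuttering function $f'$ of $T'$ with $T[f]=T'[f']$. *)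

theory Defs
  imports Main
begin

type_synonym 'a trace = "nat \<Rightarrow> 'a set"
type_synonym 'a team = "'a trace set"

definition stuttering_fun :: "'a trace \<Rightarrow> (nat \<Rightarrow> nat) \<Rightarrow> bool" where
  "stuttering_fun t f \<longleftrightarrow> strict_mono f \<and> f 0 = 0 \<and>
     (\<forall>k. \<forall>i. f k \<le> i \<and> i < f (Suc k) \<longrightarrow> t i = t (f k))"

definition team_stuttering_fun :: "'a team \<Rightarrow> (nat \<Rightarrow> nat) \<Rightarrow> bool" where
  "team_stuttering_fun T f \<longleftrightarrow> strict_mono f \<and> f 0 = 0 \<and> (\<forall>t\<in>T. stuttering_fun t f)"

definition trace_comp :: "'a trace \<Rightarrow> (nat \<Rightarrow> nat) \<Rightarrow> 'a trace" where
  "trace_comp t f = (\<lambda>k. t (f k))"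

definition team_comp :: "'a team \<Rightarrow> (nat \<Rightarrow> nat) \<Rightarrow> 'a team" where
  "team_comp T f = {trace_comp t f | t. t \<in> T}"

definition stutter_equiv :: "'a team \<Rightarrow> 'a team \<Rightarrow> bool" where
  "stutter_equiv T T' \<longleftrightarrow> (\<exists>f f'. team_stuttering_fun T f \<and> team_stuttering_fun T' f' \<and>
      team_comp T f = team_comp T' f')"

end

theory Submission
  imports Defs
begin

lemma tsf_subset: "team_stuttering_fun T f \<Longrightarrow> T1 \<subseteq> T \<Longrightarrow> team_stuttering_fun T1 f"
  unfolding team_stuttering_fun_def by blast

lemma part:
  assumes f: "team_stuttering_fun T f" and g: "team_stuttering_fun S g"
    and eq: "team_comp T f = team_comp S g" and sub: "T1 \<subseteq> T"
  shows "stutter_equiv T1 {s \<in> S. trace_comp s g \<in> team_comp T1 f}"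
  unfolding stutter_equiv_def
proof (intro exI conjI)
  show "team_stuttering_fun T1 f" using tsf_subset[OF f sub] .
  show "team_stuttering_fun {s \<in> S. trace_comp s g \<in> team_comp T1 f} g"
    by (rule tsf_subset[OF g]) blast
  show "team_comp T1 f = team_comp {s \<in> S. trace_comp s g \<in> team_comp T1 f} g"
  proof
    show "team_comp T1 f \<subseteq> team_comp {s \<in> S. trace_comp s g \<in> team_comp T1 f} g"
    proof
      fix u assume u: "u \<in> team_comp T1 f"
      then have "u \<in> team_comp T f" using sub unfolding team_comp_def by blast
      then have "u \<in> team_comp S g" using eq by simp
      then obtain s where "s \<in> S" "u = trace_comp s g" unfolding team_comp_def by blast
      then show "u \<in> team_comp {s \<in> S. trace_comp s g \<in> team_comp T1 f} g"
        using u unfolding team_comp_def by blast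
    qed
    show "team_comp {s \<in> S. trace_comp s g \<in> team_comp T1 f} g \<subseteq> team_comp T1 f"
      unfolding team_comp_def by blast
  qed
qed

lemma empty_equiv: "stutter_equiv {} S \<Longrightarrow> S = {}"
  unfolding stutter_equiv_def team_comp_def by auto

lemma team_comp_Un: "team_comp (A \<union> B) f = team_comp A f \<union> team_comp B f"
  unfolding team_comp_def by auto

theorem mainTheorem7:
  fixes T S :: "'a team"
  shows "stutter_equiv T S \<longleftrightarrow>
    (\<forall>T1 T2. T = T1 \<union> T2 \<longrightarrow>
       (\<exists>S1 S2. S = S1 \<union> S2 \<and> stutter_equiv T1 S1 \<and> stutter_equiv T2 S2))"
proof
  assume "stutter_equiv T S"
  then obtain f g where f: "team_stuttering_fun T f" and g: "team_stuttering_fun S g"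
    and eq: "team_comp T f = team_comp S g" unfolding stutter_equiv_def by blast
  show "\<forall>T1 T2. T = T1 \<union> T2 \<longrightarrow>
       (\<exists>S1 S2. S = S1 \<union> S2 \<and> stutter_equiv T1 S1 \<and> stutter_equiv T2 S2)"
  proof (intro allI impI)
    fix T1 T2 assume TT: "T = T1 \<union> T2"
    let ?S1 = "{s \<in> S. trace_comp s g \<in> team_comp T1 f}"
    let ?S2 = "{s \<in> S. trace_comp s g \<in> team_comp T2 f}"
    have "S = ?S1 \<union> ?S2"
    proof -
      have "\<And>s. s \<in> S \<Longrightarrow> trace_comp s g \<in> team_comp T1 f \<or> trace_comp s g \<in> team_comp T2 f"
      proof -
        fix s assume "s \<in> S"
        then have "trace_comp s g \<in> team_comp S g" unfolding team_comp_def by blast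
        then have "trace_comp s g \<in> team_comp (T1 \<union> T2) f" using eq TT by simp
        then show "trace_comp s g \<in> team_comp T1 f \<or> trace_comp s g \<in> team_comp T2 f"
          by (simp add: team_comp_Un)
      qed
      then show ?thesis by blast
    qed
    moreover have "stutter_equiv T1 ?S1" by (rule part[OF f g eq]) (simp add: TT)
    moreover have "stutter_equiv T2 ?S2" by (rule part[OF f g eq]) (simp add: TT)
    ultimately show "\<exists>S1 S2. S = S1 \<union> S2 \<and> stutter_equiv T1 S1 \<and> stutter_equiv T2 S2" by blast
  qed
next
  assume H: "\<forall>T1 T2. T = T1 \<union> T2 \<longrightarrow>
       (\<exists>S1 S2. S = S1 \<union> S2 \<and> stutter_equiv T1 S1 \<and> stutter_equiv T2 S2)"
  have "T = T \<union> {} \<longrightarrow> (\<exists>S1 S2. S = S1 \<union> S2 \<and> stutter_equiv T S1 \<and> stutter_equiv {} S2)"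
    using spec[OF spec[OF H, of T], of "{}"] .
  then have "\<exists>S1 S2. S = S1 \<union> S2 \<and> stutter_equiv T S1 \<and> stutter_equiv {} S2"
    by simp
  then obtain S1 S2 where 1: "S = S1 \<union> S2" and 2: "stutter_equiv T S1" and 3: "stutter_equiv {} S2"
    by blast
  from empty_equiv[OF 3] 1 have "S = S1" by simp
  then show "stutter_equiv T S" using 2 by simp
qed

end
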